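(* For $n\ge1$ let $M_n$ be the smallest positive integer lying in the ideal $(1-\omega^n)\mathbb{Z}[\lambda]$. Then $M_n$ is even for every $n\ge1$, $M_n$ is divisible by $14$ whenever $n$ is even, and $M_n$ divides the norm $N(1-\omega^n)$. Moreover every periodic point $x$ of least period dividing $n$ of the scaling map $\gamma$ satisfies $x\in\frac{1}{M_n}\mathbb{Z}[\lambda]$.
   Context: Let $\lambda$ be the real root of $x^3+x^2+x-1$, $\omega=\lambda^3=1-\lambda-\lambda^2$; $\mathbb{Z}[\lambda]$ is the ring of integers of $\mathbb{Q}(\lambda)$ and $N$ is the field norm. Scaling map: put $N=7$ and the data (for $j=0,\dots,6$): $\tau_0=\lambda+\lambda^2$, $\tau_1=-1+3\lambda$, $\tau_2=\lambda-\lambda^2$, $\tau_3=-1+2\lambda+\lambda^2$, $\tau_4=1-\lambda-\lambda^2$, $\tau_5=\lambda-\lambda^2$, $\tau_6=-\lambda$; $(\nu_0,\dots,\nu_6)=(4,13,12,8,8,12,4)$; path function $p(j,t)$, $0\le t<\nu_j$, is the $(t+1)$-th entry of the list: $j=0$: $(0,6,3,6)$; $j=1$: $(0,6,3,6,1,6,2,5,6,1,6,3,6)$; $j=2$: $(0,6,3,6,1,6,2,5,6,2,4,6)$; $j=3$: $(0,6,3,6,1,6,3,6)$; $j=4$: $(0,6,4,5,6,2,4,6)$; $j=5$: $(0,6,4,5,6,2,5,6,1,6,3,6)$; $j=6$: $(0,6,4,6)$. Let $\mathcal{V}$ be the set of sequences $\sigma=((j_1,t_1),(j_2,t_2),\dots)$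 with $0\le j_k\le 6$, $0\le t_k<\nu_{j_k}$, $j_k=p(j_{k+1},t_{k+1})$ for all $k\ge1$, and which do not end in any of the tails $(1,9)^\infty,(2,6)^\infty,(3,2)^\infty,(4,6)^\infty,(5,3)^\infty,(6,1)^\infty$. Put $d_i=\sum_{t=0}^{t_i-1}\tau_{p(j_i,t)}$ and $x(\sigma)=\sum_{i\ge1}d_i\omega^{i-1}$; the map $\sigma\mapsto x(\sigma)$ is a bijection $\mathcal{V}\to[0,1)$. The scaling map $\gamma:[0,1)\to[0,1)$ is $\gamma(x)=(x-d_1)\omega^{-1}$, where $d_1$ is the first digit of the code of $x$. A point $x$ with $\gamma^n(x)=x$ has code $((j_1,t_1),\dots,(j_n,t_n))^\infty$ and equals $\frac{1}{1-\omega^n}\sum_{i=1}^n d_i\omega^{i-1}$. *)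

theory Defs
  imports Complex_Main "Jordan_Normal_Form.Determinant"
begin

definition lam :: real where
  "lam = (THE x::real. x^3 + x^2 + x - 1 = 0)"

definition omega :: real where
  "omega = lam ^ 3"

definition Zlam :: "real set" where
  "Zlam = {x. \<exists>c::nat \<Rightarrow> int. x = (\<Sum>k<3. of_int (c k) * lam ^ k)}"

definition zl_coord :: "real \<Rightarrow> nat \<Rightarrow> int" where
  "zl_coord x = (SOME c::nat \<Rightarrow> int. x = (\<Sum>k<3. of_int (c k) * lam ^ k) \<and> (\<forall>k\<ge>3. c k = 0))"

text \<open>Field norm N(x): determinant of the matrix of multiplication by x
  in the basis 1, lam, lam^2 (for x in Z[lambda]).\<close>
definition zl_norm :: "real \<Rightarrow> int" where
  "zl_norm x = det (mat 3 3 (\<lambda>(i, j). zl_coord (x * lam ^ j) i))"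

definition Mn :: "nat \<Rightarrow> int" where
  "Mn n = (LEAST m::int. 0 < m \<and> (\<exists>\<alpha>\<in>Zlam. of_int m = (1 - omega ^ n) * \<alpha>))"

definition tau :: "nat \<Rightarrow> real" where
  "tau j = [lam + lam^2, -1 + 3*lam, lam - lam^2, -1 + 2*lam + lam^2,
            1 - lam - lam^2, lam - lam^2, -lam] ! j"

definition nu :: "nat \<Rightarrow> nat" where
  "nu j = [4, 13, 12, 8, 8, 12, 4] ! j"

definition path_list :: "nat \<Rightarrow> nat list" where
  "path_list j = [[0,6,3,6], [0,6,3,6,1,6,2,5,6,1,6,3,6], [0,6,3,6,1,6,2,5,6,2,4,6],
                  [0,6,3,6,1,6,3,6], [0,6,4,5,6,2,4,6], [0,6,4,5,6,2,5,6,1,6,3,6],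
                  [0,6,4,6]] ! j"

text \<open>p(j,t): the (t+1)-th entry of the list for j.\<close>
definition pth :: "nat \<Rightarrow> nat \<Rightarrow> nat" where
  "pth j t = path_list j ! t"

definition digit :: "nat \<times> nat \<Rightarrow> real" where
  "digit s = (\<Sum>t'<snd s. tau (pth (fst s) t'))"

definition forbidden_tails :: "(nat \<times> nat) set" where
  "forbidden_tails = {(1,9), (2,6), (3,2), (4,6), (5,3), (6,1)}"

text \<open>Admissible sequences; sigma k is the (k+1)-th symbol (j_{k+1}, t_{k+1}).\<close>
definition Vseq :: "(nat \<Rightarrow> nat \<times> nat) set" where
  "Vseq = {\<sigma>. (\<forall>k. fst (\<sigma> k) \<le> 6 \<and> snd (\<sigma> k) < nu (fst (\<sigma> k))
                  \<and> fst (\<sigma> k) = pth (fst (\<sigma> (Suc k))) (snd (\<sigma> (Suc k))))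
             \<and> \<not> (\<exists>e\<in>forbidden_tails. \<exists>K. \<forall>k\<ge>K. \<sigma> k = e)}"

definition xval :: "(nat \<Rightarrow> nat \<times> nat) \<Rightarrow> real" where
  "xval \<sigma> = (\<Sum>i. digit (\<sigma> i) * omega ^ i)"

definition code :: "real \<Rightarrow> (nat \<Rightarrow> nat \<times> nat)" where
  "code x = (THE \<sigma>. \<sigma> \<in> Vseq \<and> xval \<sigma> = x)"

definition gamma :: "real \<Rightarrow> real" where
  "gamma x = (x - digit (code x 0)) / omega"

end

theory Submission
  imports Defs
begin


definition fpol :: "real \<Rightarrow> real" where "fpol x = x^3 + x^2 + x - 1"

lemma fpol_mono: assumes "x < y" shows "fpol x < fpol y"
proof -
  have q: "0 < y^2 + x*y + x^2 + y + x + 1"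
  proof -
    have e: "4*(y^2 + x*y + x^2 + y + x + 1) = (2*x + y + 1)^2 + 3*(y + 1/3)^2 + 8/3"
      by (simp add: power2_eq_square algebra_simps)
    have "0 < (2*x + y + 1)^2 + 3*(y + 1/3)^2 + 8/3"
      by (intro add_nonneg_pos add_nonneg_nonneg) auto
    then have "0 < 4*(y^2 + x*y + x^2 + y + x + 1)" using e by simp
    then show ?thesis by simp
  qed
  have "fpol y - fpol x = (y - x) * (y^2 + x*y + x^2 + y + x + 1)"
    by (simp add: fpol_def power2_eq_square power3_eq_cube algebra_simps)
  moreover have "0 < (y - x) * (y^2 + x*y + x^2 + y + x + 1)" using assms q by simp
  ultimately show ?thesis by linarith
qed

lemma fpol_mono_le: "x \<le> y \<Longrightarrow> fpol x \<le> fpol y"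
  using fpol_mono[of x y] by (cases "x = y") auto

lemma fpol_ex: "\<exists>x. 0 \<le> x \<and> x \<le> 1 \<and> fpol x = 0"
proof -
  have "continuous_on {0..1} fpol" unfolding fpol_def by (intro continuous_intros)
  moreover have "fpol 0 \<le> 0" "0 \<le> fpol 1" by (simp_all add: fpol_def)
  ultimately show ?thesis using IVT'[of fpol 0 0 1] by auto
qed

lemma lam_root: "lam^3 + lam^2 + lam - 1 = 0"
proof -
  obtain x where x: "fpol x = 0" using fpol_ex by blast
  have u: "\<And>y. fpol y = 0 \<Longrightarrow> y = x"
    proof -
    fix y assume y: "fpol y = 0"
    show "y = x"
    proof (rule ccontr)
      assume "y \<noteq> x"
      then have "y < x \<or> x < y" by auto
      then show False using fpol_mono[of y x] fpol_mono[of x y] x y by auto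
    qed
  qed
  have u': "\<And>y. y^3+y^2+y-1 = 0 \<Longrightarrow> y = x" using u unfolding fpol_def by blast
  have x': "x^3+x^2+x-1 = 0" using x unfolding fpol_def .
  have "lam = x" unfolding lam_def
    by (rule the_equality) (rule x', rule u')
  then show ?thesis using x by (simp add: fpol_def)
qed

lemma lam_bounds: "0.54 < lam" "lam < 0.55"
proof -
  have r: "fpol lam = 0" using lam_root by (simp add: fpol_def)
  show "0.54 < lam"
  proof (rule ccontr)
    assume "\<not> 0.54 < lam"
    then have "lam \<le> 0.54" by simp
    then have "fpol lam \<le> fpol 0.54" by (rule fpol_mono_le)
    then show False using r by (simp add: fpol_def power_divide)
  qed
  show "lam < 0.55"
  proof (rule ccontr)
    assume "\<not> lam < 0.55"
    then have "0.55 \<le> lam" by simp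
    then have "fpol 0.55 \<le> fpol lam" by (rule fpol_mono_le)
    then show False using r by (simp add: fpol_def power_divide)
  qed
qed



definition zl :: "int \<Rightarrow> int \<Rightarrow> int \<Rightarrow> real" where
  "zl a b c = of_int a + of_int b * lam + of_int c * lam^2"

lemma lam3: "lam^3 = 1 - lam - lam^2" using lam_root by simp

lemma zl_mult: "zl a b c * zl d e f =
  zl (a*d + b*f + c*e - c*f) (a*e + b*d - b*f - c*e + 2*c*f) (a*f + b*e + c*d - b*f - c*e)"
proof -
  have "zl a b c * zl d e f - zl (a*d + b*f + c*e - c*f) (a*e + b*d - b*f - c*e + 2*c*f) (a*f + b*e + c*d - b*f - c*e)
    = (lam^3 + lam^2 + lam - 1) * (of_int (c*f) * lam + of_int (b*f + c*e - c*f))"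
    by (simp add: zl_def power2_eq_square power3_eq_cube algebra_simps)
  then show ?thesis using lam_root by simp
qed

lemma zl_add: "zl a b c + zl d e f = zl (a+d) (b+e) (c+f)"
  by (simp add: zl_def algebra_simps)
lemma zl_diff: "zl a b c - zl d e f = zl (a-d) (b-e) (c-f)"
  by (simp add: zl_def algebra_simps)
lemma zl_of_int: "of_int m = zl m 0 0" by (simp add: zl_def)
lemma zl_lam: "lam = zl 0 1 0" by (simp add: zl_def)
lemma zl_omega: "omega = zl 1 (-1) (-1)" by (simp add: zl_def omega_def lam3)

lemma lam_irrat: "lam \<notin> \<rat>"
proof
  assume "lam \<in> \<rat>"
  then obtain p q :: int where q: "q > 0" and cp: "coprime p q" and l: "lam = of_int p / of_int q"
    by (rule Rats_cases') auto
  have "(of_int p / of_int q)^3 + (of_int p / of_int q)^2 + of_int p / of_int q - 1 = (0::real)"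
    using lam_root l by simp
  then have "(of_int p)^3 + (of_int p)^2 * of_int q + of_int p * (of_int q)^2 - (of_int q)^3 = (0::real)"
    using q by (simp add: field_simps power2_eq_square power3_eq_cube)
  then have e: "p^3 + p^2 * q + p * q^2 - q^3 = 0"
    by (metis (mono_tags) of_int_eq_0_iff of_int_add of_int_diff of_int_mult of_int_power)
  have "p^3 = q * (q^2 - p^2 - p*q)" using e by (simp add: algebra_simps power2_eq_square power3_eq_cube)
  then have "q dvd p^3" by simp
  moreover have "coprime q (p^3)" using cp by (simp add: coprime_commute)
  ultimately have "is_unit q" by (meson coprime_common_divisor dvd_refl)
  then have "q = 1" using q by simp
  then have "lam = of_int p" using l by simp
  then have "(0::real) < of_int p" "of_int p < (1::real)" using lam_bounds by auto
  then have "0 < p" "p < 1" by simp_all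
  then show False by simp
qed

lemma descent: "b^3 - 2*b^2*c + 2*b*c^2 - 2*c^3 = (0::int) \<Longrightarrow> c = 0"
proof (induction "nat \<bar>c\<bar>" arbitrary: b c rule: less_induct)
  case less
  show ?case
  proof (rule ccontr)
    assume c0: "c \<noteq> 0"
    have "b^3 = 2*(b^2*c - b*c^2 + c^3)" using less.prems by (simp add: algebra_simps)
    then have "even (b^3)" by simp
    then have "even b" by simp
    then obtain b' where b': "b = 2*b'" by blast
    have "c^3 = 2*(2*b'^3 - 2*b'^2*c + b'*c^2)"
      using less.prems unfolding b' by (simp add: algebra_simps power2_eq_square power3_eq_cube)
    then have "even (c^3)" by simp
    then have "even c" by simp
    then obtain c' where c': "c = 2*c'" by blast
    have "8*(b'^3 - 2*b'^2*c' + 2*b'*c'^2 - 2*c'^3) = 0"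
      using less.prems unfolding b' c' by (simp add: algebra_simps power2_eq_square power3_eq_cube)
    then have g: "b'^3 - 2*b'^2*c' + 2*b'*c'^2 - 2*c'^3 = 0" by simp
    have "nat \<bar>c'\<bar> < nat \<bar>c\<bar>" using c0 c' by simp
    then have "c' = 0" using less.hyps g by blast
    then show False using c0 c' by simp
  qed
qed

lemma zl_zero: assumes "zl a b c = 0" shows "a = 0 \<and> b = 0 \<and> c = 0"
proof -
  have z1: "zl c (a-c) (b-c) = 0"
    using zl_mult[of a b c 0 1 0] assms by simp
  define P where "P = (b-c)*a - c^2"
  define Q where "Q = (b-c)*b - c*(a-c)"
  have "of_int (b-c) * zl a b c - of_int c * zl c (a-c) (b-c) = of_int P + of_int Q * lam"
    by (simp add: zl_def P_def Q_def algebra_simps power2_eq_square)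
  then have pq: "of_int P + of_int Q * lam = 0" using assms z1 by simp
  have Q0: "Q = 0"
  proof (rule ccontr)
    assume "Q \<noteq> 0"
    then have le: "lam = - of_int P / of_int Q" using pq by (simp add: field_simps)
    have "lam \<in> \<rat>" unfolding le by simp
    then show False using lam_irrat by simp
  qed
  then have P0: "P = 0" using pq by simp
  have "b^3 - 2*b^2*c + 2*b*c^2 - 2*c^3 = c*P + (b-c)*Q"
    by (simp add: P_def Q_def algebra_simps power2_eq_square power3_eq_cube)
  then have "c = 0" using descent P0 Q0 by simp
  then have "b = 0" using Q0 unfolding Q_def by simp
  then have "a = 0" using assms \<open>c = 0\<close> by (simp add: zl_def)
  then show ?thesis using \<open>b = 0\<close> \<open>c = 0\<close> by simp
qed

lemma zl_inj: "zl a b c = zl a' b' c' \<longleftrightarrow> a = a' \<and> b = b' \<and> c = c'"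
proof
  assume "zl a b c = zl a' b' c'"
  then have "zl (a-a') (b-b') (c-c') = 0" using zl_diff[of a b c a' b' c'] by simp
  then show "a = a' \<and> b = b' \<and> c = c'" using zl_zero by fastforce
qed simp

lemma sum3: "(\<Sum>k<(3::nat). f k) = f 0 + f 1 + (f 2 :: 'a :: comm_monoid_add)"
  by (simp add: numeral_3_eq_3 lessThan_Suc add_ac numeral_2_eq_2)

lemma Zlam_iff: "x \<in> Zlam \<longleftrightarrow> (\<exists>a b c. x = zl a b c)"
proof
  assume "x \<in> Zlam"
  then obtain g :: "nat \<Rightarrow> int" where "x = (\<Sum>k<3. of_int (g k) * lam ^ k)" unfolding Zlam_def by blast
  then have "x = zl (g 0) (g 1) (g 2)" by (simp add: sum3 zl_def)
  then show "\<exists>a b c. x = zl a b c" by blast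
next
  assume "\<exists>a b c. x = zl a b c"
  then obtain a b c where x: "x = zl a b c" by blast
  define g :: "nat \<Rightarrow> int" where "g = (\<lambda>k. if k = 0 then a else if k = 1 then b else c)"
  have "x = (\<Sum>k<3. of_int (g k) * lam ^ k)" by (simp add: sum3 g_def x zl_def)
  then show "x \<in> Zlam" unfolding Zlam_def by blast
qed

lemma zl_in_Zlam: "zl a b c \<in> Zlam" using Zlam_iff by blast

lemma Zlam_add: "x \<in> Zlam \<Longrightarrow> y \<in> Zlam \<Longrightarrow> x + y \<in> Zlam"
  unfolding Zlam_iff using zl_add by metis
lemma Zlam_diff: "x \<in> Zlam \<Longrightarrow> y \<in> Zlam \<Longrightarrow> x - y \<in> Zlam"
  unfolding Zlam_iff using zl_diff by metis
lemma Zlam_mult: "x \<in> Zlam \<Longrightarrow> y \<in> Zlam \<Longrightarrow> x * y \<in> Zlam"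
  unfolding Zlam_iff using zl_mult by metis
lemma Zlam_of_int: "of_int m \<in> Zlam" using zl_of_int zl_in_Zlam by metis
lemma Zlam_0: "0 \<in> Zlam" using Zlam_of_int[of 0] by simp
lemma Zlam_1: "1 \<in> Zlam" using Zlam_of_int[of 1] by simp
lemma Zlam_lam: "lam \<in> Zlam" using zl_lam zl_in_Zlam by metis
lemma Zlam_omega: "omega \<in> Zlam" using zl_omega zl_in_Zlam by metis
lemma Zlam_power: "x \<in> Zlam \<Longrightarrow> x ^ n \<in> Zlam"
  by (induction n) (auto intro: Zlam_mult Zlam_1)
lemma Zlam_sum: "(\<And>i. i \<in> A \<Longrightarrow> f i \<in> Zlam) \<Longrightarrow> sum f A \<in> Zlam"
  by (induction A rule: infinite_finite_induct) (auto intro: Zlam_add Zlam_0)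

lemma zl_coord_zl: "zl_coord (zl a b c) = (\<lambda>k. if k = 0 then a else if k = 1 then b else if k = 2 then c else 0)"
  unfolding zl_coord_def
proof (rule some_equality)
  show "zl a b c = (\<Sum>k<3. of_int (if k = 0 then a else if k = 1 then b else if k = 2 then c else 0) * lam ^ k) \<and>
    (\<forall>k::nat\<ge>3. (if k = 0 then a else if k = 1 then b else if k = 2 then c else 0) = 0)"
    by (simp add: sum3 zl_def)
next
  fix g :: "nat \<Rightarrow> int"
  assume g: "zl a b c = (\<Sum>k<3. of_int (g k) * lam ^ k) \<and> (\<forall>k\<ge>3. g k = 0)"
  then have "zl a b c = zl (g 0) (g 1) (g 2)" by (simp add: sum3 zl_def)
  then have "g 0 = a" "g 1 = b" "g 2 = c" using zl_inj by auto
  then show "g = (\<lambda>k. if k = 0 then a else if k = 1 then b else if k = 2 then c else 0)"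
    using g by (auto simp: fun_eq_iff)
qed



lemma det1: assumes "B \<in> carrier_mat 1 1" shows "det B = B $$ (0,0)"
proof -
  have "mat_delete B 0 0 \<in> carrier_mat 0 0" using mat_delete_carrier[OF assms] by simp
  then have "det (mat_delete B 0 0) = 1" by simp
  then show ?thesis using laplace_expansion_row[OF assms, of 0] by (simp add: cofactor_def)
qed

lemma det2: assumes B: "B \<in> carrier_mat 2 2"
  shows "det B = B $$ (0,0) * B $$ (1,1) - B $$ (0,1) * B $$ (1,0)"
proof -
  have c: "\<And>j. mat_delete B 0 j \<in> carrier_mat 1 1" using mat_delete_carrier[OF B] by simp
  have d: "\<And>j. det (mat_delete B 0 j) = B $$ (1, if 0 < j then 0 else 1)"
    using det1[OF c] B by (simp add: mat_delete_def)
  show ?thesis using laplace_expansion_row[OF B, of 0]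
    by (simp add: cofactor_def d numeral_2_eq_2 lessThan_Suc)
qed

lemma det3: assumes B: "B \<in> carrier_mat 3 3"
  shows "det B = B$$(0,0)*(B$$(1,1)*B$$(2,2) - B$$(1,2)*B$$(2,1))
      - B$$(0,1)*(B$$(1,0)*B$$(2,2) - B$$(1,2)*B$$(2,0))
      + B$$(0,2)*(B$$(1,0)*B$$(2,1) - B$$(1,1)*B$$(2,0))"
proof -
  have c: "\<And>j. mat_delete B 0 j \<in> carrier_mat 2 2" using mat_delete_carrier[OF B] by simp
  have d: "\<And>j. det (mat_delete B 0 j) =
     B $$ (1, if 0 < j then 0 else 1) * B $$ (2, if 1 < j then 1 else 2)
   - B $$ (1, if 1 < j then 1 else 2) * B $$ (2, if 0 < j then 0 else 1)"
    using det2[OF c] B by (simp add: mat_delete_def numeral_2_eq_2)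
  show ?thesis using laplace_expansion_row[OF B, of 0]
    by (simp add: cofactor_def d numeral_3_eq_3 numeral_2_eq_2 lessThan_Suc algebra_simps)
qed

lemma zl_lam1: "zl a b c * lam = zl c (a-c) (b-c)"
  using zl_mult[of a b c 0 1 0] by (simp add: zl_lam)
lemma zl_lam2: "zl a b c * lam^2 = zl (b-c) (2*c-b) (a-b)"
proof -
  have "zl a b c * lam^2 = (zl a b c * lam) * lam" by (simp add: power2_eq_square mult.assoc)
  also have "\<dots> = zl c (a-c) (b-c) * lam" by (simp add: zl_lam1)
  also have "\<dots> = zl (b-c) (c-(b-c)) ((a-c)-(b-c))" by (rule zl_lam1)
  finally show ?thesis by (simp add: algebra_simps)
qed

definition ND :: "int \<Rightarrow> int \<Rightarrow> int \<Rightarrow> int" where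
  "ND a b c = a*((a-c)*(a-b) - (2*c-b)*(b-c)) - c*(b*(a-b) - (2*c-b)*c) + (b-c)*(b*(b-c) - (a-c)*c)"

definition Gm :: "int \<Rightarrow> int \<Rightarrow> int \<Rightarrow> int mat" where
  "Gm a b c = mat 3 3 (\<lambda>(i,j). zl_coord (zl a b c * lam ^ j) i)"

lemma Gm_entries:
  "Gm a b c $$ (0,0) = a" "Gm a b c $$ (0,1) = c" "Gm a b c $$ (0,2) = b-c"
  "Gm a b c $$ (1,0) = b" "Gm a b c $$ (1,1) = a-c" "Gm a b c $$ (1,2) = 2*c-b"
  "Gm a b c $$ (2,0) = c" "Gm a b c $$ (2,1) = b-c" "Gm a b c $$ (2,2) = a-b"
  by (simp_all add: Gm_def zl_coord_zl zl_lam1 zl_lam2)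

lemma Gm_carrier: "Gm a b c \<in> carrier_mat 3 3" by (simp add: Gm_def)

lemma norm_zl: "zl_norm (zl a b c) = ND a b c"
proof -
  have "zl_norm (zl a b c) = det (Gm a b c)" unfolding zl_norm_def Gm_def ..
  also have "\<dots> = ND a b c" unfolding det3[OF Gm_carrier] Gm_entries ND_def by (simp add: algebra_simps)
  finally show ?thesis .
qed

lemma norm_cofactor: "zl a b c * zl ((a-c)*(a-b) - (2*c-b)*(b-c)) (-(b*(a-b) - (2*c-b)*c)) (b*(b-c) - (a-c)*c)
   = of_int (ND a b c)"
  unfolding zl_mult zl_of_int zl_inj ND_def by (simp add: algebra_simps)

lemma ND_nonzero: assumes nz: "zl a b c \<noteq> 0" shows "ND a b c \<noteq> 0"
proof
  assume "ND a b c = 0"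
  then have "det (Gm a b c) = 0" unfolding det3[OF Gm_carrier] Gm_entries ND_def by (simp add: algebra_simps)
  then obtain v where v: "v \<in> carrier_vec 3" "v \<noteq> 0\<^sub>v 3" "Gm a b c *\<^sub>v v = 0\<^sub>v 3"
    using det_0_iff_vec_prod_zero[OF Gm_carrier] by blast
  have row: "\<And>i. i < 3 \<Longrightarrow> (\<Sum>j<3. Gm a b c $$ (i,j) * v $ j) = 0"
  proof -
    fix i :: nat assume i: "i < 3"
    have "(Gm a b c *\<^sub>v v) $ i = 0" using v(3) i by simp
    then show "(\<Sum>j<3. Gm a b c $$ (i,j) * v $ j) = 0"
      using i v(1) Gm_carrier[of a b c]
      by (simp add: mult_mat_vec_def scalar_prod_def row_def atLeast0LessThan)
  qed
  have r0: "a * v$0 + c * v$1 + (b-c) * v$2 = 0" using row[of 0] unfolding sum3 Gm_entries by simp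
  have r1: "b * v$0 + (a-c) * v$1 + (2*c-b) * v$2 = 0" using row[of 1] unfolding sum3 Gm_entries by simp
  have r2: "c * v$0 + (b-c) * v$1 + (a-b) * v$2 = 0" using row[of 2] unfolding sum3 Gm_entries by simp
  have "zl a b c * zl (v$0) (v$1) (v$2) = zl (a * v$0 + c * v$1 + (b-c) * v$2)
     (b * v$0 + (a-c) * v$1 + (2*c-b) * v$2) (c * v$0 + (b-c) * v$1 + (a-b) * v$2)"
    unfolding zl_mult zl_inj by (simp add: algebra_simps)
  also have "\<dots> = 0" using r0 r1 r2 by (simp add: zl_def)
  finally have "zl (v$0) (v$1) (v$2) = 0" using nz by simp
  then have "v$0 = 0" "v$1 = 0" "v$2 = 0" using zl_zero by auto
  then have "v = 0\<^sub>v 3"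
    using v(1) by (intro eq_vecI) (auto simp: less_Suc_eq numeral_3_eq_3 numeral_2_eq_2)
  then show False using v(2) by simp
qed



fun wp :: "nat \<Rightarrow> int \<times> int \<times> int" where
  "wp 0 = (1,0,0)"
| "wp (Suc n) = (case wp n of (a,b,c) \<Rightarrow> (a-b, -a+2*b-c, -a+2*c))"

definition zl3 :: "int \<times> int \<times> int \<Rightarrow> real" where
  "zl3 u = zl (fst u) (fst (snd u)) (snd (snd u))"

definition ev_at :: "int \<Rightarrow> int \<times> int \<times> int \<Rightarrow> int" where
  "ev_at r u = fst u + fst (snd u) * r + snd (snd u) * r^2"

lemma omega_pow: "omega ^ n = zl3 (wp n)"
proof (induction n)
  case 0 then show ?case by (simp add: zl3_def zl_def)
next
  case (Suc n)
  obtain a b c where w: "wp n = (a,b,c)" by (cases "wp n")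
  have "omega ^ Suc n = zl 1 (-1) (-1) * zl a b c" using Suc w by (simp add: zl_omega zl3_def)
  also have "\<dots> = zl (a-b) (-a+2*b-c) (-a+2*c)" unfolding zl_mult by (simp add: algebra_simps)
  finally show ?case using w by (simp add: zl3_def)
qed

lemma wp_odd: "odd (ev_at 1 (wp n))"
proof (induction n)
  case 0 then show ?case by (simp add: ev_at_def)
next
  case (Suc n)
  obtain a b c where w: "wp n = (a,b,c)" by (cases "wp n")
  have "ev_at 1 (wp (Suc n)) = ev_at 1 (wp n) - 2*a" by (simp add: w ev_at_def)
  then show ?case using Suc by simp
qed

lemma wp_14: "(14::int) dvd ev_at 5 (wp n) - (-1)^n"
proof (induction n)
  case 0 then show ?case by (simp add: ev_at_def)
next
  case (Suc n)
  obtain a b c where w: "wp n = (a,b,c)" by (cases "wp n")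
  have eq: "ev_at 5 (wp (Suc n)) - (-1)^Suc n = 14*(-2*a + b + 5*c) - (ev_at 5 (wp n) - (-1)^n)"
    by (simp add: w ev_at_def algebra_simps)
  show ?case unfolding eq by (rule dvd_diff[OF dvd_triv_left Suc.IH])
qed

lemma eval_identity:
  "(B0*p + B1*s + B2*q - B2*s) + (B0*q + B1*p - B1*s - B2*q + 2*B2*s) * r + (B0*s + B1*q + B2*p - B1*s - B2*q) * r^2
   = (B0 + B1*r + B2*r^2) * (p + q*r + s*r^2) - (r^3 + r^2 + r - 1) * (B2*s*r + B1*s + B2*q - B2*s)" for B0 B1 B2 p q s r :: int
  by (simp add: algebra_simps power2_eq_square power3_eq_cube)

lemma omega_pos: "0 < omega" and omega_less1: "omega < 1"
  using lam_bounds by (simp_all add: omega_def power_less_one_iff)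

lemma omega_pow_less1: "n \<ge> 1 \<Longrightarrow> omega ^ n < 1"
  using omega_pos omega_less1 by (simp add: power_less_one_iff)

lemma ideal_least:
  fixes \<beta> :: real
  assumes b: "\<beta> \<in> Zlam" "\<beta> \<noteq> 0"
  defines "P \<equiv> \<lambda>m::int. 0 < m \<and> (\<exists>\<alpha>\<in>Zlam. of_int m = \<beta> * \<alpha>)"
  shows "P (LEAST m. P m) \<and> (\<forall>m. (\<exists>\<alpha>\<in>Zlam. of_int m = \<beta> * \<alpha>) \<longrightarrow> (LEAST m. P m) dvd m)"
proof -
  obtain a b c where bz: "\<beta> = zl a b c" using b(1) Zlam_iff by blast
  define N where "N = ND a b c"
  have N0: "N \<noteq> 0" using ND_nonzero b(2) bz N_def by simp
  obtain \<alpha> where \<alpha>: "\<alpha> \<in> Zlam" "of_int N = \<beta> * \<alpha>"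
    using norm_cofactor[of a b c] bz N_def zl_in_Zlam by metis
  have "P \<bar>N\<bar>"
  proof (cases "N > 0")
    case True then show ?thesis unfolding P_def using \<alpha> by auto
  next
    case False
    then have "of_int \<bar>N\<bar> = \<beta> * (0 - \<alpha>)" using \<alpha> N0 by simp
    moreover have "0 - \<alpha> \<in> Zlam" using \<alpha> Zlam_0 Zlam_diff by blast
    ultimately have "\<exists>\<alpha>\<in>Zlam. of_int \<bar>N\<bar> = \<beta> * \<alpha>" by blast
    then show ?thesis unfolding P_def using N0 by simp
  qed
  then have ex: "\<exists>k::nat. P (int k)" by (metis abs_ge_zero int_nat_eq)
  define k0 where "k0 = (LEAST k::nat. P (int k))"
  have Pk0: "P (int k0)" unfolding k0_def using ex by (rule LeastI_ex)
  have mink: "\<And>y. P y \<Longrightarrow> int k0 \<le> y"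
  proof -
    fix y assume y: "P y"
    then have "y > 0" unfolding P_def by simp
    then have "P (int (nat y))" using y by simp
    then have "k0 \<le> nat y" unfolding k0_def by (rule Least_le)
    then show "int k0 \<le> y" using \<open>y > 0\<close> by simp
  qed
  have L: "(LEAST m. P m) = int k0" by (rule Least_equality) (use Pk0 mink in auto)
  have "\<forall>m. (\<exists>\<alpha>\<in>Zlam. of_int m = \<beta> * \<alpha>) \<longrightarrow> int k0 dvd m"
  proof (intro allI impI)
    fix m assume "\<exists>\<alpha>\<in>Zlam. of_int m = \<beta> * \<alpha>"
    then obtain \<alpha>m where am: "\<alpha>m \<in> Zlam" "of_int m = \<beta> * \<alpha>m" by blast
    obtain \<alpha>k where ak: "\<alpha>k \<in> Zlam" "of_int (int k0) = \<beta> * \<alpha>k" using Pk0 unfolding P_def by blast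
    have k0p: "int k0 > 0" using Pk0 unfolding P_def by simp
    define r where "r = m mod int k0"
    have "r = m - (m div int k0) * int k0" unfolding r_def by (simp add: minus_div_mult_eq_mod)
    then have "of_int r = (of_int m - of_int (m div int k0) * of_int (int k0) :: real)" by simp
    also have "\<dots> = \<beta> * (\<alpha>m - of_int (m div int k0) * \<alpha>k)"
      using am(2) ak(2) by (simp add: algebra_simps)
    finally have "of_int r = \<beta> * (\<alpha>m - of_int (m div int k0) * \<alpha>k)" .
    moreover have "\<alpha>m - of_int (m div int k0) * \<alpha>k \<in> Zlam"
      using am ak by (intro Zlam_diff Zlam_mult Zlam_of_int) auto
    ultimately have rI: "\<exists>\<alpha>\<in>Zlam. of_int r = \<beta> * \<alpha>" by blast
    have "0 \<le> r" "r < int k0" unfolding r_def using k0p by simp_all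
    have "r = 0"
    proof (rule ccontr)
      assume "r \<noteq> 0"
      then have "P r" unfolding P_def using rI \<open>0 \<le> r\<close> by simp
      then show False using mink \<open>r < int k0\<close> by fastforce
    qed
    then show "int k0 dvd m" unfolding r_def by presburger
  qed
  then show ?thesis using Pk0 L by simp
qed

lemma Mn_facts:
  assumes n: "n \<ge> 1"
  shows "0 < Mn n" "\<exists>\<alpha>\<in>Zlam. of_int (Mn n) = (1 - omega ^ n) * \<alpha>"
    "\<And>m. (\<exists>\<alpha>\<in>Zlam. of_int m = (1 - omega ^ n) * \<alpha>) \<Longrightarrow> Mn n dvd m"
proof -
  have b: "1 - omega ^ n \<in> Zlam" by (intro Zlam_diff Zlam_1 Zlam_power Zlam_omega)
  have b0: "1 - omega ^ n \<noteq> 0" using omega_pow_less1[OF n] by simp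
  note L = ideal_least[OF b b0]
  show "0 < Mn n" "\<exists>\<alpha>\<in>Zlam. of_int (Mn n) = (1 - omega ^ n) * \<alpha>"
    "\<And>m. (\<exists>\<alpha>\<in>Zlam. of_int m = (1 - omega ^ n) * \<alpha>) \<Longrightarrow> Mn n dvd m"
    using L unfolding Mn_def by blast+
qed

lemma Mn_dvd_norm: assumes n: "n \<ge> 1" shows "Mn n dvd zl_norm (1 - omega ^ n)"
proof -
  obtain a b c where w: "wp n = (a,b,c)" by (cases "wp n")
  have bz: "1 - omega ^ n = zl (1-a) (-b) (-c)" using w by (simp add: omega_pow zl3_def zl_def)
  have "\<exists>\<alpha>. of_int (ND (1-a) (-b) (-c)) = (1 - omega ^ n) * \<alpha> \<and> \<alpha> \<in> Zlam"
    unfolding bz using norm_cofactor[symmetric] zl_in_Zlam by blast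
  then have "\<exists>\<alpha>\<in>Zlam. of_int (ND (1-a) (-b) (-c)) = (1 - omega ^ n) * \<alpha>" by blast
  then have "Mn n dvd ND (1-a) (-b) (-c)" by (rule Mn_facts(3)[OF n])
  then show ?thesis unfolding bz norm_zl .
qed

lemma Mn_even_14: assumes n: "n \<ge> 1" shows "even (Mn n)" "even n \<Longrightarrow> 14 dvd Mn n"
proof -
  obtain a b c where w: "wp n = (a,b,c)" by (cases "wp n")
  define B0 B1 B2 where "B0 = 1-a" "B1 = -b" "B2 = -c"
  have bz: "1 - omega ^ n = zl B0 B1 B2" using w by (simp add: omega_pow zl3_def zl_def B0_B1_B2_def)
  obtain \<alpha> where \<alpha>: "\<alpha> \<in> Zlam" "of_int (Mn n) = (1 - omega ^ n) * \<alpha>" using Mn_facts(2)[OF n] by blast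
  obtain p q s where ps: "\<alpha> = zl p q s" using \<alpha>(1) Zlam_iff by blast
  have "zl (Mn n) 0 0 = zl (B0*p + B1*s + B2*q - B2*s) (B0*q + B1*p - B1*s - B2*q + 2*B2*s) (B0*s + B1*q + B2*p - B1*s - B2*q)"
    using \<alpha>(2) unfolding bz ps zl_mult zl_of_int .
  then have X: "Mn n = B0*p + B1*s + B2*q - B2*s" "0 = B0*q + B1*p - B1*s - B2*q + 2*B2*s"
     "0 = B0*s + B1*q + B2*p - B1*s - B2*q" unfolding zl_inj by auto
  have E: "\<And>r. Mn n = (B0 + B1*r + B2*r^2) * (p + q*r + s*r^2) - (r^3 + r^2 + r - 1) * (B2*s*r + B1*s + B2*q - B2*s)"
    using eval_identity[of B0 p B1 s B2 q] X by (metis add.right_neutral mult_zero_left)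
  have e1: "B0 + B1*1 + B2*1^2 = 1 - ev_at 1 (wp n)" using w by (simp add: ev_at_def B0_B1_B2_def)
  have "even (B0 + B1*1 + B2*1^2)" unfolding e1 using wp_odd[of n] by simp
  then show "even (Mn n)" using E[of 1] by simp
  assume ev: "even n"
  have e5: "B0 + B1*5 + B2*5^2 = - (ev_at 5 (wp n) - (-1)^n)" using w ev by (simp add: ev_at_def B0_B1_B2_def)
  have "14 dvd (B0 + B1*5 + B2*5^2)" unfolding e5 using wp_14[of n] by (simp only: dvd_minus_iff)
  moreover have "(14::int) dvd (5^3 + 5^2 + 5 - 1)" by simp
  ultimately show "14 dvd Mn n" using E[of 5] by (metis dvd_diff dvd_mult2)
qed



type_synonym tri = "int \<times> int \<times> int"

definition ev :: "tri \<Rightarrow> real" where "ev u = zl3 u / 2"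

fun add3 :: "tri \<Rightarrow> tri \<Rightarrow> tri" where
  "add3 (a,b,c) (d,e,f) = (a+d, b+e, c+f)"
fun mulw3 :: "tri \<Rightarrow> tri" where
  "mulw3 (a,b,c) = (a-b, -a+2*b-c, -a+2*c)"

lemma ev_add3: "ev (add3 u v) = ev u + ev v"
  by (cases u; cases v) (simp add: ev_def zl3_def zl_def field_simps)

lemma ev_mulw3: "ev (mulw3 u) = omega * ev u"
proof (cases u)
  case (fields a b c)
  have "omega * zl a b c = zl (a-b) (-a+2*b-c) (-a+2*c)"
    unfolding zl_omega zl_mult by (simp add: algebra_simps)
  then show ?thesis using fields by (simp add: ev_def zl3_def)
qed

definition tauT :: "nat \<Rightarrow> tri" where
  "tauT k = [(0,2,2), (-2,6,0), (0,2,-2), (-2,4,2), (2,-2,-2), (0,2,-2), (0,-2,0)] ! k"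

definition aT :: "nat \<Rightarrow> tri" where
  "aT k = [(0,0,0),(2,-2,-2),(2,-4,2),(3,-4,-1),(1,0,-1),(-1,2,3),(0,2,0)] ! k"
definition bT :: "nat \<Rightarrow> tri" where
  "bT k = [(2,-2,-2),(2,-4,2),(3,-4,-1),(1,0,-1),(-1,2,3),(0,2,0),(2,0,0)] ! k"

definition dT :: "nat \<Rightarrow> nat \<Rightarrow> tri" where
  "dT j t = foldr (\<lambda>k acc. add3 (tauT k) acc) (take t (path_list j)) (0,0,0)"

definition LT :: "nat \<times> nat \<Rightarrow> tri" where "LT c = add3 (dT (fst c) (snd c)) (mulw3 (aT (fst c)))"
definition RT :: "nat \<times> nat \<Rightarrow> tri" where "RT c = add3 (dT (fst c) (snd c)) (mulw3 (bT (fst c)))"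

definition plk :: "nat \<Rightarrow> (nat \<times> nat) list" where
  "plk k = [[(0, 0), (1, 0), (2, 0), (3, 0), (4, 0), (5, 0), (6, 0)],
   [(1, 4), (2, 4), (3, 4), (5, 8), (1, 9)],
   [(2, 9), (4, 5), (5, 5), (1, 6), (2, 6)],
   [(3, 6), (5, 10), (1, 11), (0, 2), (1, 2), (2, 2), (3, 2)],
   [(4, 2), (5, 2), (6, 2), (2, 10), (4, 6)],
   [(5, 6), (1, 7), (2, 7), (4, 3), (5, 3)],
   [(6, 3), (2, 11), (4, 7), (3, 7), (5, 11), (1, 12), (0, 3), (1, 3), (2, 3), (3, 3), (5, 7), (1, 8), (2, 8), (4, 4), (5, 4), (1, 5), (2, 5), (3, 5), (5, 9), (1, 10), (0, 1), (1, 1), (2, 1), (3, 1), (4, 1), (5, 1), (6, 1)]] ! k"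

fun chainT :: "tri \<Rightarrow> (nat \<times> nat) list \<Rightarrow> tri \<Rightarrow> bool" where
  "chainT A [] B = (A = B)"
| "chainT A (c # cs) B = (LT c = A \<and> chainT (RT c) cs B)"

definition Ek :: "nat \<Rightarrow> nat \<times> nat" where
  "Ek k = (if k = 0 then (6,0) else (k, [0,9,6,2,6,3,1] ! k))"

lemma all7: "(\<forall>k<(7::nat). P k) \<longleftrightarrow> P 0 \<and> P 1 \<and> P 2 \<and> P 3 \<and> P 4 \<and> P 5 \<and> (P 6 :: bool)"
proof
  assume "\<forall>k<(7::nat). P k" then show "P 0 \<and> P 1 \<and> P 2 \<and> P 3 \<and> P 4 \<and> P 5 \<and> P 6" by simp
next
  assume H: "P 0 \<and> P 1 \<and> P 2 \<and> P 3 \<and> P 4 \<and> P 5 \<and> P 6"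
  show "\<forall>k<(7::nat). P k"
  proof (intro allI impI)
    fix k :: nat assume "k < 7"
    then have "k = 0 \<or> k = 1 \<or> k = 2 \<or> k = 3 \<or> k = 4 \<or> k = 5 \<or> k = 6" by linarith
    then show "P k" using H by auto
  qed
qed

lemma chk_chain: "\<forall>k<7. chainT (aT k) (plk k) (bT k)"
  unfolding all7 by (simp add: plk_def aT_def bT_def LT_def RT_def tauT_def dT_def path_list_def)

lemma all_lt_list: "(\<forall>t<n. P t) \<longleftrightarrow> list_all P [0..<n]"
  by (auto simp: list_all_iff)

lemma chk_valid: "\<forall>k<7. \<forall>c\<in>set (plk k). fst c \<le> 6 \<and> snd c < nu (fst c) \<and> pth (fst c) (snd c) = k"
  unfolding all7 by (simp add: plk_def nu_def pth_def path_list_def)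

lemma chk_cover: "\<forall>j<7. \<forall>t<nu j. (j,t) \<in> set (plk (pth j t))"
  unfolding all7 all_lt_list by (simp add: plk_def nu_def pth_def path_list_def upt_rec)

lemma chk_distinct: "\<forall>k<7. distinct (plk k)"
  unfolding all7 by (simp add: plk_def)

lemma chk_ab: "aT 0 = (0,0,0)" "bT 6 = (2,0,0)" "\<forall>k<6. bT k = aT (Suc k)"
  by (simp_all add: aT_def bT_def all_lt_list upt_rec)

lemma chk_last: "\<forall>k<7. plk k \<noteq> [] \<and> last (plk k) = Ek k"
  unfolding all7 by (simp add: plk_def Ek_def)

lemma chk_E: "\<forall>k<7. (k \<noteq> 0 \<longrightarrow> Ek k \<in> forbidden_tails) \<and> fst (Ek k) = (if k = 0 then 6 else k)"
  unfolding all7 by (simp add: Ek_def forbidden_tails_def)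

lemma chk_nu: "\<forall>j<7. nu j = length (path_list j) \<and> (\<forall>x\<in>set (path_list j). x < 7)"
  unfolding all7 by (simp add: nu_def path_list_def)

lemma tau_ev_all: "\<forall>k<7. tau k = ev (tauT k)"
  unfolding all7 by (simp add: tau_def tauT_def ev_def zl3_def zl_def)

lemma tau_ev: "k < 7 \<Longrightarrow> tau k = ev (tauT k)"
  using tau_ev_all by blast

lemma lam2_bounds: "0.2916 < lam^2" "lam^2 < 0.3025"
proof -
  have "0.54^2 < lam^2" using lam_bounds by (intro power_strict_mono) auto
  then show "0.2916 < lam^2" by (simp add: power_divide)
  have "lam^2 < 0.55^2" using lam_bounds by (intro power_strict_mono) auto
  then show "lam^2 < 0.3025" by (simp add: power_divide)
qed

lemma chk_pos: "\<forall>j<7. ev (aT j) < ev (bT j)"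
  unfolding all7 using lam_bounds lam2_bounds by (simp add: aT_def bT_def ev_def zl3_def zl_def)



definition valid :: "nat \<times> nat \<Rightarrow> bool" where "valid c \<longleftrightarrow> fst c \<le> 6 \<and> snd c < nu (fst c)"
definition pthc :: "nat \<times> nat \<Rightarrow> nat" where "pthc c = pth (fst c) (snd c)"
definition Ar :: "nat \<Rightarrow> real" where "Ar j = ev (aT j)"
definition Br :: "nat \<Rightarrow> real" where "Br j = ev (bT j)"
definition Lr :: "nat \<times> nat \<Rightarrow> real" where "Lr c = digit c + omega * Ar (fst c)"
definition Rr :: "nat \<times> nat \<Rightarrow> real" where "Rr c = digit c + omega * Br (fst c)"

lemma ev_zero: "ev (0,0,0) = 0" by (simp add: ev_def zl3_def zl_def)

lemma ev_foldr: "ev (foldr (\<lambda>k acc. add3 (tauT k) acc) ys (0,0,0)) = sum_list (map (\<lambda>k. ev (tauT k)) ys)"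
  by (induction ys) (simp_all add: ev_add3 ev_zero)

lemma valid_nu: "valid c \<Longrightarrow> nu (fst c) = length (path_list (fst c)) \<and> (\<forall>x\<in>set (path_list (fst c)). x < 7)"
proof -
  assume "valid c"
  then have "fst c < 7" unfolding valid_def by simp
  then show ?thesis using chk_nu by blast
qed

lemma digit_ev: assumes v: "valid c" shows "digit c = ev (dT (fst c) (snd c))"
proof -
  obtain j t where c: "c = (j,t)" by (cases c)
  define xs where "xs = path_list j"
  have len: "t \<le> length xs" and el: "\<forall>x\<in>set xs. x < 7"
    using valid_nu[OF v] v unfolding c xs_def valid_def by auto
  have "ev (dT j t) = sum_list (map (\<lambda>k. ev (tauT k)) (take t xs))"
    unfolding dT_def xs_def ev_foldr ..
  also have "\<dots> = sum_list (map tau (take t xs))"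
  proof -
    have "\<forall>x\<in>set (take t xs). x < 7" using el by (meson in_set_takeD)
    then have "map (\<lambda>k. ev (tauT k)) (take t xs) = map tau (take t xs)"
      by (intro map_cong refl) (simp add: tau_ev)
    then show ?thesis by (simp only:)
  qed
  also have "\<dots> = (\<Sum>i<t. tau (xs ! i))"
    unfolding sum_list_sum_nth using len by (simp add: atLeast0LessThan)
  also have "\<dots> = digit c" unfolding c digit_def pth_def xs_def by simp
  finally show ?thesis using c by simp
qed

lemma valid_pthc: "valid c \<Longrightarrow> pthc c < 7"
  using valid_nu[of c] unfolding valid_def pthc_def pth_def by (auto simp: nth_mem)

lemma Ar_lt_Br: "j < 7 \<Longrightarrow> Ar j < Br j" using chk_pos unfolding Ar_def Br_def by blast

lemma Lr_lt_Rr: "valid c \<Longrightarrow> Lr c < Rr c"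
  using Ar_lt_Br[of "fst c"] omega_pos unfolding Lr_def Rr_def valid_def by simp

lemma LT_ev: "valid c \<Longrightarrow> ev (LT c) = Lr c"
  by (simp add: LT_def Lr_def ev_add3 ev_mulw3 digit_ev Ar_def)
lemma RT_ev: "valid c \<Longrightarrow> ev (RT c) = Rr c"
  by (simp add: RT_def Rr_def ev_add3 ev_mulw3 digit_ev Br_def)

fun chainR :: "('a \<Rightarrow> real) \<Rightarrow> ('a \<Rightarrow> real) \<Rightarrow> real \<Rightarrow> 'a list \<Rightarrow> real \<Rightarrow> bool" where
  "chainR L R A [] B = (A = B)"
| "chainR L R A (c # cs) B = (L c = A \<and> A < R c \<and> chainR L R (R c) cs B)"

lemma chainR_le: "chainR L R A cs B \<Longrightarrow> A \<le> B"
  by (induction cs arbitrary: A) force+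

lemma chainR_bounds: "chainR L R A cs B \<Longrightarrow> c \<in> set cs \<Longrightarrow> A \<le> L c \<and> R c \<le> B"
proof (induction cs arbitrary: A)
  case Nil then show ?case by simp
next
  case (Cons d cs)
  then have d: "L d = A" "A < R d" "chainR L R (R d) cs B" by auto
  show ?case
  proof (cases "c = d")
    case True then show ?thesis using d chainR_le[OF d(3)] by simp
  next
    case False
    then have "c \<in> set cs" using Cons.prems by simp
    then show ?thesis using Cons.IH[OF d(3)] d by fastforce
  qed
qed

lemma chainR_cover: "chainR L R A cs B \<Longrightarrow> A \<le> y \<Longrightarrow> y < B \<Longrightarrow> \<exists>c\<in>set cs. L c \<le> y \<and> y < R c"
proof (induction cs arbitrary: A)
  case Nil then show ?case by simp
next
  case (Cons d cs)
  then have d: "L d = A" "A < R d" "chainR L R (R d) cs B" by auto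
  show ?case
  proof (cases "y < R d")
    case True then show ?thesis using d Cons.prems by auto
  next
    case False
    then show ?thesis using Cons.IH[OF d(3)] Cons.prems by auto
  qed
qed

lemma chainR_disj: "chainR L R A cs B \<Longrightarrow> distinct cs \<Longrightarrow> c \<in> set cs \<Longrightarrow> c' \<in> set cs \<Longrightarrow>
   L c \<le> y \<Longrightarrow> y < R c \<Longrightarrow> L c' \<le> y \<Longrightarrow> y < R c' \<Longrightarrow> c = c'"
proof (induction cs arbitrary: A)
  case Nil then show ?case by simp
next
  case (Cons d cs)
  then have d: "L d = A" "A < R d" "chainR L R (R d) cs B" by auto
  have b1: "c \<in> set cs \<Longrightarrow> R d \<le> L c" using chainR_bounds[OF d(3)] by blast
  have b2: "c' \<in> set cs \<Longrightarrow> R d \<le> L c'" using chainR_bounds[OF d(3)] by blast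
  show ?case
  proof (cases "c = d")
    case True
    then show ?thesis using Cons.prems b2 by force
  next
    case False
    then have "c \<in> set cs" using Cons.prems by simp
    moreover have "c' \<noteq> d" using Cons.prems b1[OF \<open>c \<in> set cs\<close>] by force
    ultimately show ?thesis using Cons.IH[OF d(3)] Cons.prems by auto
  qed
qed

lemma chainR_lt: "chainR L R A cs B \<Longrightarrow> cs \<noteq> [] \<Longrightarrow> A < B"
proof (cases cs)
  case (Cons d ds)
  assume "chainR L R A cs B"
  then have "L d = A" "A < R d" "chainR L R (R d) ds B" using Cons by auto
  then show ?thesis using chainR_le by fastforce
qed simp

lemma chainR_last: "chainR L R A cs B \<Longrightarrow> distinct cs \<Longrightarrow> c \<in> set cs \<Longrightarrow> R c = B \<Longrightarrow> c = last cs"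
proof (induction cs arbitrary: A)
  case Nil then show ?case by simp
next
  case (Cons d cs)
  then have d: "L d = A" "A < R d" "chainR L R (R d) cs B" by auto
  show ?case
  proof (cases "cs = []")
    case True then show ?thesis using Cons.prems by simp
  next
    case False
    have "R d < B" using chainR_lt[OF d(3) False] .
    then have "c \<noteq> d" using Cons.prems by auto
    then have "c \<in> set cs" using Cons.prems by simp
    then have "c = last cs" using Cons.IH[OF d(3)] Cons.prems by auto
    then show ?thesis using False by simp
  qed
qed

lemma chainR_of_T: "chainT A cs B \<Longrightarrow> (\<forall>c\<in>set cs. valid c) \<Longrightarrow> chainR Lr Rr (ev A) cs (ev B)"
proof (induction cs arbitrary: A)
  case Nil then show ?case by simp
next
  case (Cons d cs)
  then have "LT d = A" "chainT (RT d) cs B" "valid d" by auto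
  then show ?case using Cons.IH[of "RT d"] Cons.prems LT_ev RT_ev Lr_lt_Rr by fastforce
qed

lemma plk_valid: "k < 7 \<Longrightarrow> c \<in> set (plk k) \<Longrightarrow> valid c \<and> pthc c = k"
  using chk_valid unfolding valid_def pthc_def by blast

lemma plk_chain: "k < 7 \<Longrightarrow> chainR Lr Rr (Ar k) (plk k) (Br k)"
  unfolding Ar_def Br_def using chk_chain plk_valid by (blast intro: chainR_of_T)

lemma valid_in_plk: "valid c \<Longrightarrow> c \<in> set (plk (pthc c))"
  using chk_cover unfolding valid_def pthc_def by (cases c) auto

lemma W_chain: "chainR Ar Br 0 [0,1,2,3,4,5,6] 1"
proof -
  have e: "Ar 0 = 0" "Br 6 = 1" using chk_ab(1,2) by (simp_all add: Ar_def Br_def ev_def zl3_def zl_def)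
  have s: "\<And>k. k < 6 \<Longrightarrow> Br k = Ar (Suc k)" using chk_ab(3) by (simp add: Ar_def Br_def)
  have p: "\<And>k. k < 7 \<Longrightarrow> Ar k < Br k" by (rule Ar_lt_Br)
  show ?thesis using e s[of 0] s[of 1] s[of 2] s[of 3] s[of 4] s[of 5]
      p[of 0] p[of 1] p[of 2] p[of 3] p[of 4] p[of 5] p[of 6]
    by (simp add: numeral_eq_Suc)
qed

lemma W_in01: "k < 7 \<Longrightarrow> 0 \<le> Ar k \<and> Br k \<le> 1"
  using chainR_bounds[OF W_chain, of k] by (auto simp: less_Suc_eq numeral_eq_Suc)

lemma W_disj: "k < 7 \<Longrightarrow> k' < 7 \<Longrightarrow> Ar k \<le> y \<Longrightarrow> y < Br k \<Longrightarrow> Ar k' \<le> y \<Longrightarrow> y < Br k' \<Longrightarrow> k = k'"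
  using chainR_disj[OF W_chain, of k k' y] by (auto simp: less_Suc_eq numeral_eq_Suc)

lemma W_cover: "0 \<le> y \<Longrightarrow> y < 1 \<Longrightarrow> \<exists>k<7. Ar k \<le> y \<and> y < Br k"
  using chainR_cover[OF W_chain, of y] by (auto simp: less_Suc_eq numeral_eq_Suc)

lemma piece_in_W: "valid c \<Longrightarrow> Ar (pthc c) \<le> Lr c \<and> Rr c \<le> Br (pthc c)"
  using chainR_bounds[OF plk_chain valid_in_plk] valid_pthc by blast

lemma piece_disj: "valid c \<Longrightarrow> valid c' \<Longrightarrow> Lr c \<le> y \<Longrightarrow> y < Rr c \<Longrightarrow> Lr c' \<le> y \<Longrightarrow> y < Rr c' \<Longrightarrow> c = c'"
proof -
  assume v: "valid c" "valid c'" and y: "Lr c \<le> y" "y < Rr c" "Lr c' \<le> y" "y < Rr c'"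
  have "pthc c = pthc c'"
    using W_disj[OF valid_pthc[OF v(1)] valid_pthc[OF v(2)], of y] piece_in_W[OF v(1)] piece_in_W[OF v(2)] y
    by linarith
  then show "c = c'"
    using chainR_disj[OF plk_chain[OF valid_pthc[OF v(1)]] chk_distinct[rule_format, OF valid_pthc[OF v(1)]]
        valid_in_plk[OF v(1)], of c' y] valid_in_plk[OF v(2)] y by simp
qed

lemma piece_cover: "k < 7 \<Longrightarrow> Ar k \<le> y \<Longrightarrow> y < Br k \<Longrightarrow> \<exists>c. valid c \<and> pthc c = k \<and> Lr c \<le> y \<and> y < Rr c"
  using chainR_cover[OF plk_chain, of k y] plk_valid by blast

lemma piece_last: "valid c \<Longrightarrow> Rr c = Br (pthc c) \<Longrightarrow> c = Ek (pthc c)"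
  using chainR_last[OF plk_chain[OF valid_pthc] chk_distinct[rule_format, OF valid_pthc] valid_in_plk, of c]
    chk_last valid_pthc by metis

lemma Ek_props: "k < 7 \<Longrightarrow> (k \<noteq> 0 \<longrightarrow> Ek k \<in> forbidden_tails) \<and> fst (Ek k) = (if k = 0 then 6 else k)"
  using chk_E by blast



definition Adm :: "(nat \<Rightarrow> nat \<times> nat) \<Rightarrow> bool" where
  "Adm \<sigma> \<longleftrightarrow> (\<forall>k. valid (\<sigma> k) \<and> fst (\<sigma> k) = pthc (\<sigma> (Suc k)))"

definition shift :: "(nat \<Rightarrow> nat \<times> nat) \<Rightarrow> (nat \<Rightarrow> nat \<times> nat)" where
  "shift \<sigma> = (\<lambda>i. \<sigma> (Suc i))"

lemma Vseq_iff: "\<sigma> \<in> Vseq \<longleftrightarrow> Adm \<sigma> \<and> \<not> (\<exists>e\<in>forbidden_tails. \<exists>K. \<forall>k\<ge>K. \<sigma> k = e)"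
  unfolding Vseq_def Adm_def valid_def pthc_def by auto

lemma Adm_shift: "Adm \<sigma> \<Longrightarrow> Adm (shift \<sigma>)"
  unfolding Adm_def shift_def by auto

lemma Vseq_shift: "\<sigma> \<in> Vseq \<Longrightarrow> shift \<sigma> \<in> Vseq"
proof -
  assume s: "\<sigma> \<in> Vseq"
  have "\<not> (\<exists>e\<in>forbidden_tails. \<exists>K. \<forall>k\<ge>K. shift \<sigma> k = e)"
  proof
    assume "\<exists>e\<in>forbidden_tails. \<exists>K. \<forall>k\<ge>K. shift \<sigma> k = e"
    then obtain e K where e: "e \<in> forbidden_tails" "\<forall>k\<ge>K. \<sigma> (Suc k) = e" unfolding shift_def by blast
    then have "\<forall>k\<ge>Suc K. \<sigma> k = e" by (metis Suc_le_D Suc_le_mono)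
    then show False using s e(1) unfolding Vseq_iff by blast
  qed
  then show ?thesis using s Adm_shift unfolding Vseq_iff by blast
qed

lemma Lr_01: "valid c \<Longrightarrow> 0 \<le> Lr c \<and> Rr c \<le> 1"
  using piece_in_W[of c] W_in01[OF valid_pthc, of c] by linarith

lemma digit_bound: "valid c \<Longrightarrow> \<bar>digit c\<bar> \<le> 2"
proof -
  assume v: "valid c"
  have "fst c < 7" using v unfolding valid_def by simp
  then have a: "0 \<le> Ar (fst c)" "Ar (fst c) \<le> 1" using W_in01 Ar_lt_Br by fastforce+
  have "0 \<le> omega * Ar (fst c)" "omega * Ar (fst c) \<le> 1"
    using a omega_pos omega_less1 by (simp_all add: mult_le_one)
  moreover have "0 \<le> Lr c" "Lr c \<le> 1" using Lr_01[OF v] Lr_lt_Rr[OF v] by linarith+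
  ultimately show ?thesis unfolding Lr_def by linarith
qed

lemma xval_summable: "Adm \<sigma> \<Longrightarrow> summable (\<lambda>i. digit (\<sigma> i) * omega ^ i)"
proof -
  assume a: "Adm \<sigma>"
  have g: "summable (\<lambda>i. 2 * omega ^ i)"
    using omega_pos omega_less1 by (intro summable_mult summable_geometric) simp
  show ?thesis
  proof (rule summable_comparison_test'[OF g])
    fix i :: nat
    have "\<bar>digit (\<sigma> i)\<bar> \<le> 2" using a digit_bound unfolding Adm_def by blast
    then show "norm (digit (\<sigma> i) * omega ^ i) \<le> 2 * omega ^ i"
      using omega_pos by (simp add: abs_mult mult_right_mono)
  qed
qed

lemma xval_shift: "Adm \<sigma> \<Longrightarrow> xval \<sigma> = digit (\<sigma> 0) + omega * xval (shift \<sigma>)"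
proof -
  assume a: "Adm \<sigma>"
  note s = xval_summable[OF a]
  have s': "summable (\<lambda>i. digit (shift \<sigma> i) * omega ^ i)" using xval_summable[OF Adm_shift[OF a]] .
  have "(\<Sum>i. digit (\<sigma> (Suc i)) * omega ^ Suc i) = xval \<sigma> - digit (\<sigma> 0)"
    using suminf_split_head[OF s] unfolding xval_def by simp
  moreover have "(\<Sum>i. digit (\<sigma> (Suc i)) * omega ^ Suc i) = omega * xval (shift \<sigma>)"
  proof -
    have "(\<Sum>i. digit (\<sigma> (Suc i)) * omega ^ Suc i) = (\<Sum>i. omega * (digit (shift \<sigma> i) * omega ^ i))"
      by (simp add: shift_def algebra_simps)
    also have "\<dots> = omega * xval (shift \<sigma>)" unfolding xval_def by (rule suminf_mult[OF s'])
    finally show ?thesis .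
  qed
  ultimately show ?thesis by simp
qed

lemma xval_bound: "Adm \<sigma> \<Longrightarrow> \<bar>xval \<sigma>\<bar> \<le> 2 / (1 - omega)"
proof -
  assume a: "Adm \<sigma>"
  note s = xval_summable[OF a]
  have g: "summable (\<lambda>i. 2 * omega ^ i)"
    using omega_pos omega_less1 by (intro summable_mult summable_geometric) simp
  have gs: "(\<Sum>i. 2 * omega ^ i) = 2 / (1 - omega)"
    using suminf_mult[of "\<lambda>i. omega ^ i" 2] suminf_geometric[of omega] omega_pos omega_less1 by simp
  have b: "\<And>i. \<bar>digit (\<sigma> i) * omega ^ i\<bar> \<le> 2 * omega ^ i"
  proof -
    fix i
    have "\<bar>digit (\<sigma> i)\<bar> \<le> 2" using a digit_bound unfolding Adm_def by blast
    then show "\<bar>digit (\<sigma> i) * omega ^ i\<bar> \<le> 2 * omega ^ i"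
      using omega_pos by (simp add: abs_mult mult_right_mono)
  qed
  have b2: "- (2 * omega ^ i) \<le> digit (\<sigma> i) * omega ^ i" for i
    using b[of i] unfolding abs_le_iff by linarith
  have "xval \<sigma> \<le> (\<Sum>i. 2 * omega ^ i)" unfolding xval_def
    by (rule suminf_le[OF _ s g]) (use b in \<open>simp add: abs_le_iff\<close>)
  moreover have "(\<Sum>i. - (2 * omega ^ i)) \<le> xval \<sigma>" unfolding xval_def
    by (rule suminf_le[OF b2 summable_minus[OF g] s])
  moreover have "(\<Sum>i. - (2 * omega ^ i)) = - (\<Sum>i. 2 * omega ^ i)" using suminf_minus[OF g] .
  ultimately show ?thesis using gs by simp
qed

definition exc :: "(nat \<Rightarrow> nat \<times> nat) \<Rightarrow> real" where
  "exc \<sigma> = max (max (Ar (pthc (\<sigma> 0)) - xval \<sigma>) (xval \<sigma> - Br (pthc (\<sigma> 0)))) 0"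

lemma exc_step: assumes a: "Adm \<sigma>" shows "exc \<sigma> \<le> omega * exc (shift \<sigma>)"
proof -
  define c where "c = \<sigma> 0"
  define j where "j = fst c"
  define x' where "x' = xval (shift \<sigma>)"
  define e' where "e' = exc (shift \<sigma>)"
  have v: "valid c" using a unfolding Adm_def c_def by blast
  have j: "j = pthc (shift \<sigma> 0)" using a unfolding Adm_def j_def c_def shift_def by blast
  have e'0: "0 \<le> e'" unfolding e'_def exc_def by simp
  have x'b: "Ar j - e' \<le> x'" "x' \<le> Br j + e'" unfolding e'_def exc_def x'_def j by auto
  have x: "xval \<sigma> = digit c + omega * x'" using xval_shift[OF a] unfolding c_def x'_def .
  have p: "Ar (pthc c) \<le> Lr c" "Rr c \<le> Br (pthc c)" using piece_in_W[OF v] by auto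
  have "omega * (Ar j - e') \<le> omega * x'" "omega * x' \<le> omega * (Br j + e')"
    using x'b omega_pos by (simp_all add: mult_left_mono)
  then have "Ar (pthc c) - xval \<sigma> \<le> omega * e'" "xval \<sigma> - Br (pthc c) \<le> omega * e'"
    using p x unfolding Lr_def Rr_def j_def by (simp_all add: algebra_simps)
  moreover have "0 \<le> omega * e'" using e'0 omega_pos by simp
  ultimately show ?thesis unfolding exc_def e'_def c_def by simp
qed

lemma exc_bound: assumes a: "Adm \<sigma>" shows "exc \<sigma> \<le> 2 / (1 - omega) + 1"
proof -
  have "pthc (\<sigma> 0) < 7" using a valid_pthc unfolding Adm_def by blast
  then have "0 \<le> Ar (pthc (\<sigma> 0))" "Br (pthc (\<sigma> 0)) \<le> 1" "Ar (pthc (\<sigma> 0)) \<le> 1" "0 \<le> Br (pthc (\<sigma> 0))"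
    using W_in01 Ar_lt_Br by fastforce+
  moreover have "\<bar>xval \<sigma>\<bar> \<le> 2 / (1 - omega)" using xval_bound[OF a] .
  moreover have "0 \<le> 2 / (1 - omega)" using omega_less1 by simp
  ultimately show ?thesis unfolding exc_def by (simp add: abs_le_iff)
qed

lemma exc_zero: assumes a: "Adm \<sigma>" shows "exc \<sigma> \<le> 0"
proof -
  define K where "K = 2 / (1 - omega) + 1"
  have K: "0 < K" unfolding K_def using omega_less1 by (simp add: add_nonneg_pos)
  have ind: "\<And>m. \<forall>\<tau>. Adm \<tau> \<longrightarrow> exc \<tau> \<le> omega ^ m * K"
  proof -
    fix m show "\<forall>\<tau>. Adm \<tau> \<longrightarrow> exc \<tau> \<le> omega ^ m * K"
    proof (induction m)
      case 0 then show ?case using exc_bound unfolding K_def by simp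
    next
      case (Suc m)
      show ?case
      proof (intro allI impI)
        fix \<tau> assume t: "Adm \<tau>"
        have "exc \<tau> \<le> omega * exc (shift \<tau>)" by (rule exc_step[OF t])
        also have "\<dots> \<le> omega * (omega ^ m * K)"
          using Suc Adm_shift[OF t] omega_pos by (simp add: mult_left_mono)
        finally show "exc \<tau> \<le> omega ^ Suc m * K" by (simp add: algebra_simps)
      qed
    qed
  qed
  show ?thesis
  proof (rule ccontr)
    assume "\<not> exc \<sigma> \<le> 0"
    then have "0 < exc \<sigma> / K" using K by simp
    then obtain m where m: "omega ^ m < exc \<sigma> / K" using real_arch_pow_inv omega_less1 by blast
    then have "omega ^ m * K < exc \<sigma>" using K by (simp add: field_simps)
    then show False using ind[of m] a by fastforce
  qed
qed

lemma xval_closed: "Adm \<sigma> \<Longrightarrow> Ar (pthc (\<sigma> 0)) \<le> xval \<sigma> \<and> xval \<sigma> \<le> Br (pthc (\<sigma> 0))"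
  using exc_zero[of \<sigma>] unfolding exc_def by simp

lemma top_step: assumes a: "Adm \<tau>" and t: "xval \<tau> = Br (pthc (\<tau> 0))"
  shows "\<tau> 0 = Ek (pthc (\<tau> 0)) \<and> xval (shift \<tau>) = Br (pthc (\<tau> 1))"
proof -
  define c where "c = \<tau> 0"
  have v: "valid c" using a unfolding Adm_def c_def by blast
  have j: "fst c = pthc (shift \<tau> 0)" using a unfolding Adm_def c_def shift_def by blast
  have x'b: "xval (shift \<tau>) \<le> Br (fst c)" using xval_closed[OF Adm_shift[OF a]] j by simp
  have x: "xval \<tau> = digit c + omega * xval (shift \<tau>)" using xval_shift[OF a] unfolding c_def .
  have p: "Rr c \<le> Br (pthc c)" using piece_in_W[OF v] by auto
  have "omega * xval (shift \<tau>) \<le> omega * Br (fst c)" using x'b omega_pos by (simp add: mult_left_mono)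
  then have "Rr c = Br (pthc c)" "omega * xval (shift \<tau>) = omega * Br (fst c)"
    using x p t unfolding Rr_def c_def by linarith+
  then have "c = Ek (pthc c)" "xval (shift \<tau>) = Br (fst c)" using piece_last[OF v] omega_pos by auto
  then show ?thesis using j unfolding c_def shift_def by simp
qed

lemma xval_strict: assumes s: "\<sigma> \<in> Vseq" shows "xval \<sigma> < Br (pthc (\<sigma> 0))"
proof (rule ccontr)
  assume "\<not> xval \<sigma> < Br (pthc (\<sigma> 0))"
  then have t0: "xval \<sigma> = Br (pthc (\<sigma> 0))" using xval_closed[of \<sigma>] s unfolding Vseq_iff by force
  have a: "Adm \<sigma>" using s unfolding Vseq_iff by blast
  define sh where "sh i = (\<lambda>n. \<sigma> (n + i))" for i
  have sha: "Adm (sh i)" for i unfolding sh_def using a unfolding Adm_def by simp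
  have sh_Suc: "sh (Suc i) = shift (sh i)" for i unfolding sh_def shift_def by auto
  have top: "xval (sh i) = Br (pthc (\<sigma> i))" for i
  proof (induction i)
    case 0 then show ?case using t0 unfolding sh_def by simp
  next
    case (Suc i)
    have "xval (sh i) = Br (pthc (sh i 0))" using Suc unfolding sh_def by simp
    then have "xval (shift (sh i)) = Br (pthc (sh i 1))" using top_step[OF sha] by blast
    then show ?case unfolding sh_Suc by (simp add: sh_def)
  qed
  have E: "\<sigma> i = Ek (pthc (\<sigma> i))" for i
  proof -
    have "xval (sh i) = Br (pthc (sh i 0))" using top[of i] unfolding sh_def by simp
    then have "sh i 0 = Ek (pthc (sh i 0))" using top_step[OF sha] by blast
    then show ?thesis unfolding sh_def by simp
  qed
  define s where "s i = pthc (\<sigma> i)" for i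
  have s7: "s i < 7" for i unfolding s_def using a valid_pthc unfolding Adm_def by blast
  have snext: "s (Suc i) = (if s i = 0 then 6 else s i)" for i
  proof -
    have "s (Suc i) = fst (\<sigma> i)" using a unfolding Adm_def s_def by simp
    also have "\<dots> = fst (Ek (s i))" using E[of i] unfolding s_def by simp
    also have "\<dots> = (if s i = 0 then 6 else s i)" using Ek_props[OF s7[of i]] by simp
    finally show ?thesis .
  qed
  have s1: "s (Suc i) = s 1 \<and> s 1 \<noteq> 0" for i
  proof (induction i)
    case 0 then show ?case using snext[of 0] by simp
  next
    case (Suc i) then show ?case using snext[of "Suc i"] by simp
  qed
  have "\<forall>k\<ge>1. \<sigma> k = Ek (s 1)"
  proof (intro allI impI)
    fix k :: nat assume "1 \<le> k"
    then obtain i where "k = Suc i" by (cases k) auto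
    then show "\<sigma> k = Ek (s 1)" using E[of k] s1[of i] unfolding s_def by simp
  qed
  moreover have "Ek (s 1) \<in> forbidden_tails" using Ek_props[OF s7[of 1]] s1[of 0] by blast
  ultimately show False using s unfolding Vseq_iff by blast
qed

lemma xval_piece: assumes s: "\<sigma> \<in> Vseq" shows "Lr (\<sigma> 0) \<le> xval \<sigma> \<and> xval \<sigma> < Rr (\<sigma> 0)"
proof -
  have a: "Adm \<sigma>" using s unfolding Vseq_iff by blast
  have j: "fst (\<sigma> 0) = pthc (shift \<sigma> 0)" using a unfolding Adm_def shift_def by blast
  have b: "Ar (fst (\<sigma> 0)) \<le> xval (shift \<sigma>)" "xval (shift \<sigma>) < Br (fst (\<sigma> 0))"
    using xval_closed[OF Adm_shift[OF a]] xval_strict[OF Vseq_shift[OF s]] j by auto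
  have x: "xval \<sigma> = digit (\<sigma> 0) + omega * xval (shift \<sigma>)" using xval_shift[OF a] .
  show ?thesis unfolding Lr_def Rr_def x using b omega_pos by (simp add: mult_left_mono)
qed

lemma xval_01: "\<sigma> \<in> Vseq \<Longrightarrow> 0 \<le> xval \<sigma> \<and> xval \<sigma> < 1"
  using xval_piece[of \<sigma>] Lr_01[of "\<sigma> 0"] unfolding Vseq_iff Adm_def by fastforce

lemma xval_unique: assumes "\<sigma> \<in> Vseq" "\<tau> \<in> Vseq" "xval \<sigma> = xval \<tau>" shows "\<sigma> = \<tau>"
proof -
  have "\<forall>\<sigma> \<tau>. \<sigma> \<in> Vseq \<longrightarrow> \<tau> \<in> Vseq \<longrightarrow> xval \<sigma> = xval \<tau> \<longrightarrow> \<sigma> i = \<tau> i" for i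
  proof (induction i)
    case 0
    show ?case
    proof (intro allI impI)
      fix \<sigma> \<tau> assume h: "\<sigma> \<in> Vseq" "\<tau> \<in> Vseq" "xval \<sigma> = xval \<tau>"
      have "valid (\<sigma> 0)" "valid (\<tau> 0)" using h unfolding Vseq_iff Adm_def by blast+
      then show "\<sigma> 0 = \<tau> 0" using piece_disj xval_piece[OF h(1)] xval_piece[OF h(2)] h(3) by metis
    qed
  next
    case (Suc i)
    show ?case
    proof (intro allI impI)
      fix \<sigma> \<tau> assume h: "\<sigma> \<in> Vseq" "\<tau> \<in> Vseq" "xval \<sigma> = xval \<tau>"
      have "valid (\<sigma> 0)" "valid (\<tau> 0)" using h unfolding Vseq_iff Adm_def by blast+
      then have e0: "\<sigma> 0 = \<tau> 0" using piece_disj xval_piece[OF h(1)] xval_piece[OF h(2)] h(3) by metis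
      have "xval \<sigma> = digit (\<sigma> 0) + omega * xval (shift \<sigma>)" "xval \<tau> = digit (\<tau> 0) + omega * xval (shift \<tau>)"
        using xval_shift h unfolding Vseq_iff by blast+
      then have "xval (shift \<sigma>) = xval (shift \<tau>)" using h(3) e0 omega_pos by simp
      then have "shift \<sigma> i = shift \<tau> i" using Suc Vseq_shift[OF h(1)] Vseq_shift[OF h(2)] by blast
      then show "\<sigma> (Suc i) = \<tau> (Suc i)" unfolding shift_def .
    qed
  qed
  then show ?thesis using assms by blast
qed



lemma chainR_Rlast: "chainR L R A cs B \<Longrightarrow> cs \<noteq> [] \<Longrightarrow> R (last cs) = B"
proof (induction cs arbitrary: A)
  case Nil then show ?case by simp
next
  case (Cons d cs)
  then show ?case by (cases cs) auto
qed

lemma forb_Ek: "e \<in> forbidden_tails \<Longrightarrow> \<exists>k. 0 < k \<and> k < 7 \<and> e = Ek k"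
proof -
  assume "e \<in> forbidden_tails"
  then have "e = Ek 1 \<or> e = Ek 2 \<or> e = Ek 3 \<or> e = Ek 4 \<or> e = Ek 5 \<or> e = Ek 6"
    by (auto simp: forbidden_tails_def Ek_def)
  moreover have "0 < (1::nat) \<and> (1::nat) < 7" "0 < (2::nat) \<and> (2::nat) < 7" "0 < (3::nat) \<and> (3::nat) < 7"
    "0 < (4::nat) \<and> (4::nat) < 7" "0 < (5::nat) \<and> (5::nat) < 7" "0 < (6::nat) \<and> (6::nat) < 7" by simp_all
  ultimately show ?thesis by blast
qed

lemma Ek_piece: assumes k: "0 < k" "k < 7"
  shows "valid (Ek k) \<and> pthc (Ek k) = k \<and> fst (Ek k) = k \<and> Rr (Ek k) = Br k"
proof -
  have ne: "plk k \<noteq> []" and l: "last (plk k) = Ek k" using chk_last k by auto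
  have "Ek k \<in> set (plk k)" using ne l last_in_set by metis
  then have "valid (Ek k) \<and> pthc (Ek k) = k" using plk_valid k by blast
  moreover have "Rr (Ek k) = Br k" using chainR_Rlast[OF plk_chain[OF k(2)] ne] l by simp
  moreover have "fst (Ek k) = k" using Ek_props[OF k(2)] k by simp
  ultimately show ?thesis by blast
qed

definition pc :: "real \<Rightarrow> nat \<times> nat" where
  "pc y = (SOME c. valid c \<and> Lr c \<le> y \<and> y < Rr c)"
definition nx :: "real \<Rightarrow> real" where
  "nx y = (y - digit (pc y)) / omega"

lemma pc_spec: "0 \<le> y \<Longrightarrow> y < 1 \<Longrightarrow> valid (pc y) \<and> Lr (pc y) \<le> y \<and> y < Rr (pc y)"
proof -
  assume y: "0 \<le> y" "y < 1"
  obtain k where "k < 7" "Ar k \<le> y" "y < Br k" using W_cover[OF y] by blast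
  then have "\<exists>c. valid c \<and> Lr c \<le> y \<and> y < Rr c" using piece_cover by blast
  then show ?thesis unfolding pc_def by (rule someI_ex)
qed

lemma nx_spec: assumes y: "0 \<le> y" "y < 1"
  shows "Ar (fst (pc y)) \<le> nx y \<and> nx y < Br (fst (pc y)) \<and> y = digit (pc y) + omega * nx y
     \<and> 0 \<le> nx y \<and> nx y < 1"
proof -
  note p = pc_spec[OF y]
  have j: "fst (pc y) < 7" using p unfolding valid_def by simp
  have e: "y = digit (pc y) + omega * nx y" unfolding nx_def using omega_pos by simp
  have "omega * Ar (fst (pc y)) \<le> omega * nx y" "omega * nx y < omega * Br (fst (pc y))"
    using p e unfolding Lr_def Rr_def by linarith+
  then have "Ar (fst (pc y)) \<le> nx y" "nx y < Br (fst (pc y))" using omega_pos by simp_all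
  then show ?thesis using e W_in01[OF j] by simp
qed

definition gc :: "real \<Rightarrow> nat \<Rightarrow> nat \<times> nat" where
  "gc y = (\<lambda>i. pc ((nx ^^ i) y))"

lemma ys_01: "0 \<le> y \<Longrightarrow> y < 1 \<Longrightarrow> 0 \<le> (nx ^^ i) y \<and> (nx ^^ i) y < 1"
  by (induction i) (simp_all add: nx_spec)

lemma gc_Adm: assumes y: "0 \<le> y" "y < 1" shows "Adm (gc y)"
  unfolding Adm_def
proof
  fix i
  define z where "z = (nx ^^ i) y"
  have z: "0 \<le> z" "z < 1" using ys_01[OF y] unfolding z_def by auto
  have z': "(nx ^^ Suc i) y = nx z" unfolding z_def by simp
  note p = pc_spec[OF z]
  note n = nx_spec[OF z]
  have j: "fst (pc z) < 7" using p unfolding valid_def by simp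
  have nz: "0 \<le> nx z" "nx z < 1" using n by auto
  note p' = pc_spec[OF nz]
  have "Ar (pthc (pc (nx z))) \<le> nx z" "nx z < Br (pthc (pc (nx z)))"
    using p' piece_in_W[of "pc (nx z)"] by linarith+
  then have "pthc (pc (nx z)) = fst (pc z)"
    using W_disj[OF valid_pthc[of "pc (nx z)"] j] p' n by blast
  then show "valid (gc y i) \<and> fst (gc y i) = pthc (gc y (Suc i))"
    using p unfolding gc_def z' z_def by simp
qed

lemma gc_partial: assumes y: "0 \<le> y" "y < 1"
  shows "y = (\<Sum>i<m. digit (gc y i) * omega ^ i) + omega ^ m * (nx ^^ m) y"
proof (induction m)
  case 0 then show ?case by simp
next
  case (Suc m)
  define z where "z = (nx ^^ m) y"
  define w where "w = nx z"
  have z: "0 \<le> z" "z < 1" using ys_01[OF y] unfolding z_def by auto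
  define dd where "dd = digit (pc z)"
  have ez: "z = dd + omega * w" using nx_spec[OF z] unfolding w_def dd_def by simp
  have wz: "(nx ^^ Suc m) y = w" unfolding w_def z_def by simp
  have "y = (\<Sum>i<m. digit (gc y i) * omega ^ i) + omega ^ m * z" using Suc unfolding z_def .
  also have "\<dots> = (\<Sum>i<m. digit (gc y i) * omega ^ i) + omega ^ m * dd + omega ^ Suc m * w"
    using ez by (simp add: algebra_simps)
  also have "\<dots> = (\<Sum>i<Suc m. digit (gc y i) * omega ^ i) + omega ^ Suc m * (nx ^^ Suc m) y"
    unfolding wz by (simp add: gc_def z_def dd_def algebra_simps)
  finally show ?case .
qed

lemma gc_xval: assumes y: "0 \<le> y" "y < 1" shows "xval (gc y) = y"
proof -
  define S where "S m = (\<Sum>i<m. digit (gc y i) * omega ^ i)" for m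
  have S1: "S \<longlonglongrightarrow> xval (gc y)" unfolding S_def xval_def
    by (rule summable_LIMSEQ[OF xval_summable[OF gc_Adm[OF y]]])
  have t: "(\<lambda>m. omega ^ m * (nx ^^ m) y) \<longlonglongrightarrow> 0"
  proof (rule tendsto_sandwich[of "\<lambda>m. 0" _ _ "\<lambda>m. omega ^ m"])
    show "\<forall>\<^sub>F m in sequentially. 0 \<le> omega ^ m * (nx ^^ m) y"
      using ys_01[OF y] omega_pos by simp
    show "\<forall>\<^sub>F m in sequentially. omega ^ m * (nx ^^ m) y \<le> omega ^ m"
    proof (rule always_eventually, rule allI)
      fix m
      have "(nx ^^ m) y \<le> 1" using ys_01[OF y, of m] by simp
      then show "omega ^ m * (nx ^^ m) y \<le> omega ^ m" using omega_pos by (simp add: mult_left_le)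
    qed
    show "(\<lambda>m. 0) \<longlonglongrightarrow> (0::real)" by simp
    show "(\<lambda>m. omega ^ m) \<longlonglongrightarrow> 0" using omega_pos omega_less1 by (intro LIMSEQ_power_zero) simp
  qed
  have "(\<lambda>m. y - omega ^ m * (nx ^^ m) y) \<longlonglongrightarrow> y - 0" by (intro tendsto_intros t)
  moreover have "S = (\<lambda>m. y - omega ^ m * (nx ^^ m) y)"
    using gc_partial[OF y] unfolding S_def by (metis add_diff_cancel)
  ultimately have "S \<longlonglongrightarrow> y" by simp
  then show ?thesis using S1 LIMSEQ_unique by blast
qed

lemma gc_shift: "(\<lambda>i. gc y (i + K)) = gc ((nx ^^ K) y)"
  unfolding gc_def by (simp add: funpow_add)

lemma xval_const: "xval (\<lambda>i. e) = digit e / (1 - omega)"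
proof -
  have "xval (\<lambda>i. e) = (\<Sum>i. digit e * omega ^ i)" unfolding xval_def ..
  also have "\<dots> = digit e * (1 / (1 - omega))"
    using suminf_mult[of "\<lambda>i. omega ^ i" "digit e"] suminf_geometric[of omega] omega_pos omega_less1 by simp
  finally show ?thesis by simp
qed

lemma gc_Vseq: assumes y: "0 \<le> y" "y < 1" shows "gc y \<in> Vseq"
proof -
  have "\<not> (\<exists>e\<in>forbidden_tails. \<exists>K. \<forall>k\<ge>K. gc y k = e)"
  proof
    assume "\<exists>e\<in>forbidden_tails. \<exists>K. \<forall>k\<ge>K. gc y k = e"
    then obtain e K where e: "e \<in> forbidden_tails" "\<forall>k\<ge>K. gc y k = e" by blast
    define z where "z = (nx ^^ K) y"
    have z: "0 \<le> z" "z < 1" using ys_01[OF y] unfolding z_def by auto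
    have gz: "gc z = (\<lambda>i. e)" using gc_shift[of y K] e(2) unfolding z_def[symmetric] by (auto simp: fun_eq_iff)
    have xz: "z = digit e / (1 - omega)" using gc_xval[OF z] gz xval_const by simp
    have "z < Rr e" using pc_spec[OF z] gz unfolding gc_def by (metis funpow_0)
    obtain k where k: "0 < k" "k < 7" "e = Ek k" using forb_Ek[OF e(1)] by blast
    note ep = Ek_piece[OF k(1,2)]
    have "Rr e = digit e + omega * Br k" unfolding Rr_def using ep k(3) by simp
    then have "Br k = digit e / (1 - omega)" using ep k(3) omega_less1 by (simp add: field_simps)
    then show False using xz \<open>z < Rr e\<close> ep k(3) by simp
  qed
  then show ?thesis unfolding Vseq_iff using gc_Adm[OF y] by blast
qed

lemma code_spec: assumes x: "0 \<le> x" "x < 1" shows "code x \<in> Vseq \<and> xval (code x) = x"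
proof -
  have "\<exists>!\<sigma>. \<sigma> \<in> Vseq \<and> xval \<sigma> = x"
    using gc_Vseq[OF x] gc_xval[OF x] xval_unique by blast
  then show ?thesis unfolding code_def by (rule theI')
qed

lemma tau_zl: "tau 0 = zl 0 1 1" "tau 1 = zl (-1) 3 0" "tau 2 = zl 0 1 (-1)" "tau 3 = zl (-1) 2 1"
  "tau 4 = zl 1 (-1) (-1)" "tau 5 = zl 0 1 (-1)" "tau 6 = zl 0 (-1) 0"
  by (simp_all add: tau_def zl_def)

lemma tau_Zlam: "k < 7 \<Longrightarrow> tau k \<in> Zlam"
proof -
  have "\<forall>k<7. tau k \<in> Zlam" unfolding all7 tau_zl by (simp add: zl_in_Zlam)
  then show "k < 7 \<Longrightarrow> tau k \<in> Zlam" by blast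
qed

lemma digit_Zlam: assumes v: "valid c" shows "digit c \<in> Zlam"
proof -
  have n: "nu (fst c) = length (path_list (fst c))" "\<forall>x\<in>set (path_list (fst c)). x < 7"
    using valid_nu[OF v] by auto
  have "\<And>t. t < snd c \<Longrightarrow> pth (fst c) t < 7"
  proof -
    fix t assume "t < snd c"
    then have "t < length (path_list (fst c))" using n v unfolding valid_def by simp
    then have "path_list (fst c) ! t \<in> set (path_list (fst c))" by (rule nth_mem)
    then show "pth (fst c) t < 7" using n unfolding pth_def by blast
  qed
  then show ?thesis unfolding digit_def by (intro Zlam_sum tau_Zlam) simp
qed

lemma gamma_spec: assumes x: "0 \<le> x" "x < 1"
  shows "0 \<le> gamma x \<and> gamma x < 1 \<and> (\<exists>e\<in>Zlam. x = e + omega * gamma x)"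
proof -
  note cs = code_spec[OF x]
  have a: "Adm (code x)" using cs unfolding Vseq_iff by blast
  have xs: "x = digit (code x 0) + omega * xval (shift (code x))" using xval_shift[OF a] cs by simp
  have "x - digit (code x 0) = omega * xval (shift (code x))" using xs by simp
  then have g: "gamma x = xval (shift (code x))" unfolding gamma_def using omega_pos by simp
  have "digit (code x 0) \<in> Zlam" using a digit_Zlam unfolding Adm_def by blast
  moreover have "0 \<le> gamma x \<and> gamma x < 1" using g xval_01[OF Vseq_shift] cs by simp
  moreover have "x = digit (code x 0) + omega * gamma x" using xs g by simp
  ultimately show ?thesis by blast
qed

lemma orbit: assumes x: "0 \<le> x" "x < 1"
  shows "0 \<le> (gamma ^^ m) x \<and> (gamma ^^ m) x < 1 \<and> (\<exists>D\<in>Zlam. x = D + omega ^ m * (gamma ^^ m) x)"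
proof (induction m)
  case 0 then show ?case using x Zlam_0 by auto
next
  case (Suc m)
  then obtain D where D: "D \<in> Zlam" "x = D + omega ^ m * (gamma ^^ m) x" and
    z: "0 \<le> (gamma ^^ m) x" "(gamma ^^ m) x < 1" by blast
  define zz where "zz = (gamma ^^ m) x"
  define g where "g = gamma zz"
  obtain e where e: "e \<in> Zlam" "zz = e + omega * g"
    and g: "0 \<le> g" "g < 1"
    using gamma_spec[OF z] unfolding zz_def[symmetric] g_def[symmetric] by blast
  have gS: "(gamma ^^ Suc m) x = g" unfolding g_def zz_def by simp
  have "x = D + omega ^ m * zz" using D(2) unfolding zz_def .
  then have "x = (D + omega ^ m * e) + omega ^ Suc m * (gamma ^^ Suc m) x"
    unfolding gS using e(2) by (simp add: algebra_simps)
  moreover have "D + omega ^ m * e \<in> Zlam" using D e by (intro Zlam_add Zlam_mult Zlam_power Zlam_omega)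
  ultimately show ?case using g gS by auto
qed

theorem mainTheorem7:
  fixes n :: nat
  assumes "n \<ge> 1"
  shows "even (Mn n)
       \<and> (even n \<longrightarrow> 14 dvd Mn n)
       \<and> Mn n dvd zl_norm (1 - omega ^ n)
       \<and> (\<forall>x\<in>{0..<1::real}. (gamma ^^ n) x = x \<longrightarrow> x \<in> (\<lambda>y. y / of_int (Mn n)) ` Zlam)"
proof (intro conjI impI ballI)
  show "even (Mn n)" using Mn_even_14(1)[OF assms] .
  show "even n \<Longrightarrow> 14 dvd Mn n" using Mn_even_14(2)[OF assms] .
  show "Mn n dvd zl_norm (1 - omega ^ n)" using Mn_dvd_norm[OF assms] .
  fix x :: real assume x: "x \<in> {0..<1}" and per: "(gamma ^^ n) x = x"
  obtain D where D: "D \<in> Zlam" "x = D + omega ^ n * x" using orbit[of x n] x per by auto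
  obtain \<alpha> where \<alpha>: "\<alpha> \<in> Zlam" "of_int (Mn n) = (1 - omega ^ n) * \<alpha>" using Mn_facts(2)[OF assms] by blast
  have M0: "of_int (Mn n) \<noteq> (0::real)" using Mn_facts(1)[OF assms] by simp
  have b0: "1 - omega ^ n \<noteq> 0" using omega_pow_less1[OF assms] by simp
  have "x * (1 - omega ^ n) = D" using D(2) by (simp add: algebra_simps)
  then have "x * of_int (Mn n) = D * \<alpha>" using \<alpha>(2) by (metis mult.assoc)
  then have "x = (D * \<alpha>) / of_int (Mn n)" using M0 by (simp add: field_simps)
  moreover have "D * \<alpha> \<in> Zlam" using D \<alpha> Zlam_mult by blast
  ultimately show "x \<in> (\<lambda>y. y / of_int (Mn n)) ` Zlam" by blast
qed


end
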